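(* Let $X$ be a separable metrizable space with $\operatorname{card}(X)>1$, let $S$ be a ubiquitously dense subset of $X$, and put $\kappa=\operatorname{card}(S)$. Then there exists a family $\{A(\alpha)\}_{\alpha<\kappa}$ of subsets of $X$ such that: (1) each $A(\alpha)$ is countable; (2) each $A(\alpha)$ is dense in $X$; (3) $A(\alpha)\cap A(\beta)=\emptyset$ whenever $\alpha\neq\beta$; (4) $S=\bigcup_{\alpha<\kappa}A(\alpha)$.
   Context: A subset $S$ of a topological space $X$ is ubiquitously dense if $\operatorname{card}(U\cap S)=\operatorname{card}(S)$ for every non-empty open subset $U$ of $X$. Cardinals are identified with initial ordinals, so $\alpha<\kappa$ ranges over ordinals less than $\kappa$. *)

theory Defs
  imports "HOL-Analysis.Analysis" "HOL-Library.Equipollence"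
begin

definition ubiquitously_dense :: "'a topology \<Rightarrow> 'a set \<Rightarrow> bool" where
  "ubiquitously_dense X S \<longleftrightarrow> S \<subseteq> topspace X \<and>
     (\<forall>U. openin X U \<and> U \<noteq> {} \<longrightarrow> U \<inter> S \<approx> S)"

end

theory Submission
  imports Defs
begin

context
  includes cardinal_syntax
begin

lemma inj_choice:
  fixes S :: "'a set" and b :: "nat \<Rightarrow> 'a set"
  assumes inf: "\<not> finite S" and C: "\<And>n. |b n \<inter> S| =o |S|"
  shows "\<exists>p. inj_on p (S \<times> (UNIV::nat set)) \<and> (\<forall>x\<in>S \<times> (UNIV::nat set). p x \<in> b (snd x) \<inter> S)"
proof -
  define I where "I = S \<times> (UNIV::nat set)"
  define r where "r = |I|"
  have Cr: "Card_order r" unfolding r_def by (rule card_of_Card_order)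
  have Fr: "Field r = I" unfolding r_def by (rule Field_card_of)
  have WO: "Well_order r" unfolding r_def using card_of_well_order_on Field_card_of by metis
  have wr: "wo_rel r" using WO by (simp add: wo_rel_def)
  have IS: "r =o |S|" unfolding r_def I_def
    by (rule card_of_Times_infinite_simps(1)) (use inf infinite_iff_card_of_nat in auto)
  define H where "H = (\<lambda>f x. (SOME y. y \<in> b (snd x) \<inter> S \<and> y \<notin> (f::'a \<times> nat \<Rightarrow> 'a) ` underS r x))"
  have adm: "wo_rel.adm_wo r H"
    unfolding wo_rel.adm_wo_def[OF wr] H_def
  proof (intro allI impI)
    fix f g :: "'a \<times> nat \<Rightarrow> 'a" and x
    assume "\<forall>y\<in>underS r x. f y = g y"
    hence "f ` underS r x = g ` underS r x" by (intro image_cong) auto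
    thus "(SOME y. y \<in> b (snd x) \<inter> S \<and> y \<notin> f ` underS r x) =
          (SOME y. y \<in> b (snd x) \<inter> S \<and> y \<notin> g ` underS r x)" by simp
  qed
  define p where "p = wo_rel.worec r H"
  have pfix: "p = H p" unfolding p_def using wo_rel.worec_fixpoint[OF wr adm] .
  have ex: "\<exists>y. y \<in> b (snd x) \<inter> S \<and> y \<notin> p ` underS r x" if x: "x \<in> I" for x
  proof (rule ccontr)
    assume "\<not> ?thesis"
    hence "b (snd x) \<inter> S \<subseteq> p ` underS r x" by blast
    hence "|b (snd x) \<inter> S| \<le>o |p ` underS r x|" by (rule card_of_mono1)
    also have "|p ` underS r x| \<le>o |underS r x|" by (rule card_of_image)
    finally have 1: "|b (snd x) \<inter> S| \<le>o |underS r x|" .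
    have "|underS r x| <o r" using card_of_underS[OF Cr] x Fr by auto
    with 1 have "|b (snd x) \<inter> S| <o r" using ordLeq_ordLess_trans by blast
    hence "|b (snd x) \<inter> S| <o |S|" using IS ordLess_ordIso_trans by blast
    hence "|S| <o |S|" using C ordIso_ordLess_trans ordIso_symmetric by blast
    thus False using ordLess_irreflexive by blast
  qed
  have px: "p x \<in> b (snd x) \<inter> S \<and> p x \<notin> p ` underS r x" if "x \<in> I" for x
  proof -
    have "p x = H p x" using pfix by metis
    thus ?thesis unfolding H_def using someI_ex[OF ex[OF that]] by simp
  qed
  have "inj_on p I"
  proof (rule inj_onI)
    fix x y assume x: "x \<in> I" and y: "y \<in> I" and e: "p x = p y"
    show "x = y"
    proof (rule ccontr)
      assume ne: "x \<noteq> y"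
      have "(x, y) \<in> r \<or> (y, x) \<in> r" using WO x y ne Fr
        unfolding well_order_on_def linear_order_on_def total_on_def by blast
      hence "x \<in> underS r y \<or> y \<in> underS r x" using ne unfolding underS_def by auto
      thus False using px[OF x] px[OF y] e by (metis image_eqI)
    qed
  qed
  thus ?thesis using px I_def by blast
qed
end

lemma pi_base:
  assumes sep: "separable_space X" and met: "metrizable_space X" and ne: "topspace X \<noteq> {}"
  shows "\<exists>b::nat \<Rightarrow> 'a set. (\<forall>n. openin X (b n) \<and> b n \<noteq> {}) \<and>
           (\<forall>U. openin X U \<and> U \<noteq> {} \<longrightarrow> (\<exists>n. b n \<subseteq> U))"
proof -
  obtain M d where md: "Metric_space M d" and XM: "X = Metric_space.mtopology M d"
    using met unfolding metrizable_space_def by blast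
  interpret Metric_space M d by (rule md)
  obtain D where D: "countable D" "D \<subseteq> topspace X" "X closure_of D = topspace X"
    using sep unfolding separable_space_def by blast
  have Dne: "D \<noteq> {}" using D(3) ne by (metis closure_of_empty)
  define F where "F = (\<lambda>(x,m::nat). mball x (1 / Suc m)) ` (D \<times> UNIV)"
  have cF: "countable F" unfolding F_def using D(1) by auto
  have Fne: "F \<noteq> {}" unfolding F_def using Dne by auto
  define b where "b = from_nat_into F"
  have rb: "range b = F" unfolding b_def using cF Fne by (simp add: range_from_nat_into)
  have DM: "D \<subseteq> M" using D(2) XM by simp
  have "openin X (b n) \<and> b n \<noteq> {}" for n
  proof -
    have "b n \<in> F" using rb by blast
    then obtain x m where "x \<in> D" "b n = mball x (1 / Suc m)" unfolding F_def by auto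
    moreover have "x \<in> mball x (1 / Suc m)" using \<open>x \<in> D\<close> DM by auto
    ultimately show ?thesis using XM by (metis empty_iff openin_mball)
  qed
  moreover have "\<exists>n. b n \<subseteq> U" if U: "openin X U" "U \<noteq> {}" for U
  proof -
    obtain x where x: "x \<in> U" using U by auto
    have oU: "openin mtopology U" using U XM by simp
    then obtain r where r: "r > 0" "mball x r \<subseteq> U" using x openin_mtopology by blast
    obtain m :: nat where m: "inverse (real (Suc m)) < r / 2"
      using reals_Archimedean[of "r/2"] r(1) by auto
    have xM: "x \<in> M" using oU x openin_mtopology by blast
    have xc: "x \<in> X closure_of D" using D(3) xM XM by simp
    have xb: "x \<in> mball x (1 / Suc m)" using xM by simp
    have om: "openin X (mball x (1 / Suc m))" using XM by simp
    have "\<forall>T. x \<in> T \<and> openin X T \<longrightarrow> (\<exists>y. y \<in> D \<and> y \<in> T)"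
      using xc unfolding in_closure_of by blast
    then obtain y where y: "y \<in> D" "y \<in> mball x (1 / Suc m)" using xb om by blast
    have "mball y (1 / Suc m) \<subseteq> mball x r"
    proof (rule mball_subset)
      have "d y x < 1 / Suc m" using y(2) commute by simp
      thus "d y x + 1 / real (Suc m) \<le> r" using m by (simp add: field_simps)
    qed (use xM in auto)
    moreover have "mball y (1 / Suc m) \<in> F" unfolding F_def using y(1) by force
    moreover obtain n where "b n = mball y (1 / Suc m)" using calculation(2) rb by (metis rangeE)
    ultimately show ?thesis using r(2) by blast
  qed
  ultimately show ?thesis by (intro exI[of _ b]) simp
qed

lemma ud_infinite:
  assumes H: "Hausdorff_space X" and two: "\<exists>x\<in>topspace X. \<exists>y\<in>topspace X. x \<noteq> y"
    and ud: "ubiquitously_dense X S" and Sne: "S \<noteq> {}"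
  shows "\<not> finite S"
proof
  assume fin: "finite S"
  obtain s where s: "s \<in> S" using Sne by auto
  have sT: "s \<in> topspace X" using s ud unfolding ubiquitously_dense_def by auto
  obtain x y where xy: "x \<in> topspace X" "y \<in> topspace X" "x \<noteq> y" using two by blast
  obtain z where z: "z \<in> topspace X" "z \<noteq> s"
  proof (cases "x = s")
    case True thus ?thesis using that xy by blast
  next
    case False thus ?thesis using that xy by blast
  qed
  obtain U V where UV: "openin X U" "openin X V" "z \<in> U" "s \<in> V" "disjnt U V"
    using H z sT unfolding Hausdorff_space_def by meson
  have "U \<inter> S \<approx> S" using ud UV(1,3) unfolding ubiquitously_dense_def by blast
  moreover have "finite (U \<inter> S)" using fin by simp
  ultimately have "card (U \<inter> S) = card S" using fin eqpoll_iff_card by blast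
  hence "U \<inter> S = S" using fin by (intro card_subset_eq) auto
  thus False using s UV(4,5) unfolding disjnt_def by auto
qed

theorem theorem2p3:
  fixes X :: "'a topology" and S :: "'a set"
  assumes "separable_space X" and "metrizable_space X"
    and "\<exists>x\<in>topspace X. \<exists>y\<in>topspace X. x \<noteq> y"
    and "ubiquitously_dense X S"
  shows "\<exists>A :: 'a \<Rightarrow> 'a set.
           (\<forall>\<alpha>\<in>Field (card_of S). A \<alpha> \<subseteq> topspace X) \<and>
           (\<forall>\<alpha>\<in>Field (card_of S). countable (A \<alpha>)) \<and>
           (\<forall>\<alpha>\<in>Field (card_of S). X closure_of (A \<alpha>) = topspace X) \<and>
           (\<forall>\<alpha>\<in>Field (card_of S). \<forall>\<beta>\<in>Field (card_of S). \<alpha> \<noteq> \<beta> \<longrightarrow> A \<alpha> \<inter> A \<beta> = {}) \<and>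
           S = (\<Union>\<alpha>\<in>Field (card_of S). A \<alpha>)"
proof (cases "S = {}")
  case True
  show ?thesis unfolding True Field_card_of by (rule exI[of _ "\<lambda>_. {}"]) simp
next
  case False
  have ST: "S \<subseteq> topspace X" using assms(4) unfolding ubiquitously_dense_def by auto
  have inf: "\<not> finite S"
    using ud_infinite[OF metrizable_imp_Hausdorff_space[OF assms(2)] assms(3,4) False] .
  have ne: "topspace X \<noteq> {}" using assms(3) by auto
  obtain b :: "nat \<Rightarrow> 'a set" where b: "\<And>n. openin X (b n) \<and> b n \<noteq> {}"
    "\<And>U. openin X U \<Longrightarrow> U \<noteq> {} \<Longrightarrow> \<exists>n. b n \<subseteq> U"
  proof -
    from pi_base[OF assms(1,2) ne] obtain b0 :: "nat \<Rightarrow> 'a set" where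
      "(\<forall>n. openin X (b0 n) \<and> b0 n \<noteq> {}) \<and> (\<forall>U. openin X U \<and> U \<noteq> {} \<longrightarrow> (\<exists>n. b0 n \<subseteq> U))"
      by (elim exE)
    thus ?thesis by (intro that[of b0]) blast+
  qed
  have C: "ordIso2 (card_of (b n \<inter> S)) (card_of S)" for n
  proof -
    have "b n \<inter> S \<approx> S" using assms(4) b(1)[of n] unfolding ubiquitously_dense_def by blast
    thus ?thesis by (rule eqpoll_iff_card_of_ordIso[THEN iffD1])
  qed
  obtain p where p: "inj_on p (S \<times> (UNIV::nat set))"
    "\<And>x. x \<in> S \<times> (UNIV::nat set) \<Longrightarrow> p x \<in> b (snd x) \<inter> S"
  proof -
    from inj_choice[of S b, OF inf C] obtain p0 where "inj_on p0 (S \<times> (UNIV::nat set))"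
      "\<forall>x\<in>S \<times> (UNIV::nat set). p0 x \<in> b (snd x) \<inter> S" by (elim exE conjE)
    thus ?thesis by (intro that[of p0]) blast+
  qed
  define R where "R = S - p ` (S \<times> UNIV)"
  define A where "A = (\<lambda>\<alpha>. (\<lambda>n. p (\<alpha>, n)) ` UNIV \<union> ({\<alpha>} \<inter> R))"
  have AS: "A \<alpha> \<subseteq> S" if "\<alpha> \<in> S" for \<alpha> using p(2) that unfolding A_def R_def by auto
  have 1: "\<forall>\<alpha>\<in>S. A \<alpha> \<subseteq> topspace X" using AS ST by blast
  have 2: "\<forall>\<alpha>\<in>S. countable (A \<alpha>)" unfolding A_def by auto
  have 3: "\<forall>\<alpha>\<in>S. X closure_of (A \<alpha>) = topspace X"
  proof (intro ballI, unfold dense_intersects_open, intro allI impI)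
    fix \<alpha> T assume a: "\<alpha> \<in> S" and T: "openin X T \<and> T \<noteq> {}"
    obtain n where "b n \<subseteq> T" using b(2) T by blast
    moreover have "p (\<alpha>, n) \<in> b n" using p(2)[of "(\<alpha>, n)"] a by auto
    moreover have "p (\<alpha>, n) \<in> A \<alpha>" unfolding A_def by auto
    ultimately show "A \<alpha> \<inter> T \<noteq> {}" by blast
  qed
  have 4: "\<forall>\<alpha>\<in>S. \<forall>\<beta>\<in>S. \<alpha> \<noteq> \<beta> \<longrightarrow> A \<alpha> \<inter> A \<beta> = {}"
  proof (intro ballI impI)
    fix \<alpha> \<beta> assume a: "\<alpha> \<in> S" "\<beta> \<in> S" "\<alpha> \<noteq> \<beta>"
    show "A \<alpha> \<inter> A \<beta> = {}"
    proof (rule ccontr)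
      assume "A \<alpha> \<inter> A \<beta> \<noteq> {}"
      then obtain z where z: "z \<in> A \<alpha>" "z \<in> A \<beta>" by blast
      show False
      proof (cases "z \<in> R")
        case True
        hence "z \<notin> p ` (S \<times> UNIV)" unfolding R_def by auto
        hence "z = \<alpha>" "z = \<beta>" using z a unfolding A_def by auto
        thus False using a by simp
      next
        case nR: False
        have "z \<in> range (\<lambda>n. p (\<alpha>, n))" "z \<in> range (\<lambda>n. p (\<beta>, n))"
          using z nR unfolding A_def by auto
        then obtain n m where "z = p (\<alpha>, n)" "z = p (\<beta>, m)" by blast
        hence "(\<alpha>, n) = (\<beta>, m)" using p(1) a unfolding inj_on_def by auto
        thus False using a by simp
      qed
    qed
  qed
  have 5: "S = (\<Union>\<alpha>\<in>S. A \<alpha>)"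
  proof
    show "(\<Union>\<alpha>\<in>S. A \<alpha>) \<subseteq> S" using AS by blast
    show "S \<subseteq> (\<Union>\<alpha>\<in>S. A \<alpha>)"
    proof
      fix s assume s: "s \<in> S"
      show "s \<in> (\<Union>\<alpha>\<in>S. A \<alpha>)"
      proof (cases "s \<in> R")
        case True thus ?thesis using s unfolding A_def by blast
      next
        case False
        then obtain \<alpha> n where "\<alpha> \<in> S" "s = p (\<alpha>, n)" using s unfolding R_def by auto
        thus ?thesis unfolding A_def by blast
      qed
    qed
  qed
  show ?thesis unfolding Field_card_of
    by (rule exI[of _ A], intro conjI, fact 1, fact 2, fact 3, fact 4, fact 5)
qed

end
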